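(* Let $p$ be an odd prime, $\mathbb{F}$ a field of characteristic $p$, and $a,s$ natural numbers with $a<p$. Then, as $\mathbb{F}C$-modules, $$H^{(a^{sp})}(R_{as})\big\downarrow_C\cong\bigoplus_{\delta}K_\delta,$$ where $\delta$ runs over all set partitions of $\{1,\ldots,as\}$ into $s$ sets of size $a$.
   Context: $H^{(a^{sp})}$ is the $\mathbb{F}S_{asp}$-permutation module with basis the set partitions of $\{1,\ldots,asp\}$ into $sp$ sets of size $a$. For $j\geq1$ let $z_j=(p(j-1)+1,\ldots,pj)$ and $\mathcal{O}_j=\{p(j-1)+1,\ldots,pj\}$; $\sigma=z_1\cdots z_{as}$, $R_{as}=\langle\sigma\rangle$, and $C=\langle z_1\rangle\times\cdots\times\langle z_{as}\rangle\leq N_{S_{asp}}(R_{as})$. The Brauer quotient $H^{(a^{sp})}(R_{as})$ (fixed points of $R_{as}$ modulo relative traces from proper subgroups) is identified with the $\mathbb{F}$-span of the set partitions fixed by $R_{as}$. Given a set partition $\delta=\{\delta_1,\ldots,\delta_s\}$ of $\{1,\ldots,as\}$ into sets of size $a$, a fixed set partition $\omega$ has type $\delta$ if there are sets $A_1,\ldots,A_s$ with $|A_i\cap\mathcal{O}_j|=1$ if $j\in\delta_i$ and $0$ otherwise, such that $\omega=\{A_i\sigma^k: 1\leq i\leq s, 0\leq k\leq p-1\}$; $K_\delta$ is the subspace of $H^{(a^{sp})}(R_{as})$ spanned by the fixed set partitions of type $\delta$. *)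

theory Defs
  imports "HOL-Library.Disjoint_Sets" "HOL-Computational_Algebra.Primes"
begin

(* Permutations of {1..asp} are modelled as functions nat => nat (identity outside). *)

definition orb :: "nat \<Rightarrow> nat \<Rightarrow> nat set" where
  "orb p j = {p*(j-1)+1 .. p*j}"

definition zcyc :: "nat \<Rightarrow> nat \<Rightarrow> nat \<Rightarrow> nat" where
  "zcyc p j x = (if x \<in> orb p j then (if x = p*j then p*(j-1)+1 else Suc x) else x)"

definition sigma :: "nat \<Rightarrow> nat \<Rightarrow> nat \<Rightarrow> nat" where
  "sigma p n = foldr (\<lambda>j f. zcyc p j \<circ> f) [1..<Suc n] id"

definition Rgrp :: "nat \<Rightarrow> nat \<Rightarrow> (nat \<Rightarrow> nat) set" where
  "Rgrp p n = range (\<lambda>k. sigma p n ^^ k)"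

definition Cgrp :: "nat \<Rightarrow> nat \<Rightarrow> (nat \<Rightarrow> nat) set" where
  "Cgrp p n = {g. \<exists>k :: nat \<Rightarrow> nat. g = foldr (\<lambda>j f. (zcyc p j ^^ k j) \<circ> f) [1..<Suc n] id}"

definition setparts :: "nat \<Rightarrow> nat \<Rightarrow> nat \<Rightarrow> nat set set set" where
  "setparts N m a = {P. partition_on {1..N} P \<and> card P = m \<and> (\<forall>B\<in>P. card B = a)}"

definition act_part :: "(nat \<Rightarrow> nat) \<Rightarrow> nat set set \<Rightarrow> nat set set" where
  "act_part g \<omega> = (\<lambda>B. g ` B) ` \<omega>"

(* set partitions of {1..asp} into sp sets of size a fixed by R_{as}:
   the basis of the Brauer quotient H^{(a^{sp})}(R_{as}) *)
definition fixparts :: "nat \<Rightarrow> nat \<Rightarrow> nat \<Rightarrow> nat set set set" where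
  "fixparts p a s = {\<omega> \<in> setparts (a*s*p) (s*p) a. \<forall>g\<in>Rgrp p (a*s). act_part g \<omega> = \<omega>}"

(* omega has type delta (the sets A_i are indexed by the blocks of delta) *)
definition has_type :: "nat \<Rightarrow> nat \<Rightarrow> nat \<Rightarrow> nat set set \<Rightarrow> nat set set \<Rightarrow> bool" where
  "has_type p a s \<delta> \<omega> \<longleftrightarrow>
     (\<exists>A :: nat set \<Rightarrow> nat set.
        (\<forall>D\<in>\<delta>. \<forall>j\<ge>1. card (A D \<inter> orb p j) = (if j \<in> D then 1 else 0)) \<and>
        \<omega> = {(sigma p (a*s) ^^ k) ` (A D) | D k. D \<in> \<delta> \<and> k \<le> p - 1})"

(* The Brauer quotient H^{(a^{sp})}(R_{as}), identified with the F-span of the fixed set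
   partitions: vectors are coefficient functions supported on fixparts. *)
definition Hbr :: "nat \<Rightarrow> nat \<Rightarrow> nat \<Rightarrow> (nat set set \<Rightarrow> 'f::field) set" where
  "Hbr p a s = {v. \<forall>\<omega>. v \<omega> \<noteq> 0 \<longrightarrow> \<omega> \<in> fixparts p a s}"

definition Kdelta :: "nat \<Rightarrow> nat \<Rightarrow> nat \<Rightarrow> nat set set \<Rightarrow> (nat set set \<Rightarrow> 'f::field) set" where
  "Kdelta p a s \<delta> = {v. \<forall>\<omega>. v \<omega> \<noteq> 0 \<longrightarrow> \<omega> \<in> fixparts p a s \<and> has_type p a s \<delta> \<omega>}"

(* linear action of g in C on H(R): permutation of the basis, g . omega = act_part g omega *)
definition act_vec :: "nat \<Rightarrow> nat \<Rightarrow> nat \<Rightarrow> (nat \<Rightarrow> nat) \<Rightarrow> (nat set set \<Rightarrow> 'f::field) \<Rightarrow> (nat set set \<Rightarrow> 'f)" where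
  "act_vec p a s g v = (\<lambda>\<omega>'. \<Sum>\<omega>\<in>{\<omega> \<in> fixparts p a s. act_part g \<omega> = \<omega>'}. v \<omega>)"

end

theory Submission imports Defs "HOL-Number_Theory.Cong" begin


definition blk :: "nat \<Rightarrow> nat \<Rightarrow> nat" where "blk p x = (x-1) div p + 1"
definition rot :: "nat \<Rightarrow> nat \<Rightarrow> nat \<Rightarrow> nat" where
  "rot p m x = p*((x-1) div p) + ((x-1) mod p + m) mod p + 1"
definition Fm :: "nat \<Rightarrow> (nat \<Rightarrow> nat) \<Rightarrow> nat \<Rightarrow> nat" where
  "Fm p c x = (if x = 0 then 0 else rot p (c (blk p x)) x)"

lemma rot_ge1: "rot p m x \<ge> 1" by (simp add: rot_def)
lemma rot_pos: "0 < rot p m x" by (simp add: rot_def)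

lemma rot_m1: "rot p m x - 1 = ((x-1) mod p + m) mod p + (x-1) div p * p"
  by (simp add: rot_def)
lemma rot_div: "0 < p \<Longrightarrow> (rot p m x - 1) div p = (x-1) div p"
  by (subst rot_m1) simp
lemma rot_mod: "0 < p \<Longrightarrow> (rot p m x - 1) mod p = ((x-1) mod p + m) mod p"
  by (subst rot_m1) simp
lemma blk_rot: "0 < p \<Longrightarrow> blk p (rot p m x) = blk p x"
  using rot_div[of p m x] by (simp add: blk_def)
lemma rot_rot: "0 < p \<Longrightarrow> rot p m' (rot p m x) = rot p (m+m') x"
  unfolding rot_def[of p m'] using rot_div[of p m x] rot_mod[of p m x]
  by (simp add: rot_def[of p "m+m'"] mod_add_left_eq add.assoc)
lemma rot_0: "1 \<le> x \<Longrightarrow> rot p 0 x = x"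
  by (simp add: rot_def)
lemma rot_modp: "1 \<le> x \<Longrightarrow> m mod p = 0 \<Longrightarrow> rot p m x = x"
  by (simp add: rot_def mod_add_right_eq[symmetric])
lemma rot_exists: "0 < p \<Longrightarrow> 1 \<le> x \<Longrightarrow> 1 \<le> y \<Longrightarrow> blk p x = blk p y \<Longrightarrow> \<exists>k<p. rot p k y = x"
proof -
  assume p: "0 < p" and x: "1 \<le> x" and y: "1 \<le> y" and b: "blk p x = blk p y"
  define k where "k = ((x-1) mod p + p - (y-1) mod p) mod p"
  have "((y-1) mod p + k) mod p = (x-1) mod p"
  proof -
    have "((y-1) mod p + k) mod p = ((y-1) mod p + ((x-1) mod p + p - (y-1) mod p)) mod p"
      unfolding k_def by (simp add: mod_add_right_eq)
    also have "\<dots> = ((x-1) mod p + p) mod p"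
    proof -
      have "(y-1) mod p < p" using p by simp
      hence "(y-1) mod p + ((x-1) mod p + p - (y-1) mod p) = (x-1) mod p + p" by linarith
      thus ?thesis by simp
    qed
    also have "\<dots> = (x-1) mod p" by simp
    finally show ?thesis .
  qed
  moreover have "(y-1) div p = (x-1) div p" using b by (simp add: blk_def)
  ultimately have "rot p k y = p*((x-1) div p) + (x-1) mod p + 1" unfolding rot_def by simp
  also have "\<dots> = x" using x by simp
  finally have "rot p k y = x" .
  moreover have "k < p" using p by (simp add: k_def)
  ultimately show ?thesis by blast
qed
lemma rot_inj_mult:
  assumes "prime p" "\<not> p dvd k" "m < p" "m' < p" "1 \<le> x" "rot p (k*m) x = rot p (k*m') x"
  shows "m = m'"
proof -
  have p: "0 < p" using assms(1) prime_gt_0_nat by blast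
  have "(rot p (k*m) x - 1) mod p = (rot p (k*m') x - 1) mod p" using assms(6) by simp
  hence "((x-1) mod p + k*m) mod p = ((x-1) mod p + k*m') mod p" using rot_mod[OF p] by simp
  hence "[(x-1) mod p + k*m = (x-1) mod p + k*m'] (mod p)" by (simp add: cong_def)
  hence "[k*m = k*m'] (mod p)" by (simp add: cong_add_lcancel_nat)
  moreover have "coprime k p" using assms(1,2) prime_imp_coprime coprime_commute by blast
  ultimately have "[m = m'] (mod p)" using cong_mult_lcancel_nat by blast
  thus ?thesis using assms(3,4) by (simp add: cong_def)
qed

lemma orb_iff: "0 < p \<Longrightarrow> 1 \<le> j \<Longrightarrow> x \<in> orb p j \<longleftrightarrow> 1 \<le> x \<and> blk p x = j"
proof -
  assume p: "0 < p" and j: "1 \<le> j"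
  have "x \<in> orb p j \<longleftrightarrow> 1 \<le> x \<and> p*(j-1) \<le> x - 1 \<and> x - 1 < p*j" unfolding orb_def by auto
  also have "\<dots> \<longleftrightarrow> 1 \<le> x \<and> (x-1) div p = j - 1"
  proof -
    have "p*(j-1) \<le> x - 1 \<longleftrightarrow> j - 1 \<le> (x-1) div p" using p
      by (simp add: less_eq_div_iff_mult_less_eq mult.commute)
    moreover have "x - 1 < p*j \<longleftrightarrow> (x-1) div p < j" using p
      by (simp add: div_less_iff_less_mult mult.commute)
    ultimately show ?thesis using j by auto
  qed
  also have "\<dots> \<longleftrightarrow> 1 \<le> x \<and> blk p x = j" using j by (auto simp: blk_def)
  finally show ?thesis .
qed

lemma range_iff: "0 < p \<Longrightarrow> x \<in> {1..n*p} \<longleftrightarrow> 1 \<le> x \<and> blk p x \<le> n"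
  by (auto simp: blk_def less_Suc_eq_le[symmetric] div_less_iff_less_mult)


lemma Fm_comp: "0 < p \<Longrightarrow> Fm p c (Fm p d x) = Fm p (\<lambda>i. d i + c i) x"
  by (simp add: Fm_def blk_rot rot_rot rot_ge1 Suc_le_eq[symmetric])
     (metis One_nat_def not_one_le_zero rot_ge1)

lemma Fm_comp_fun: "0 < p \<Longrightarrow> Fm p c \<circ> Fm p d = Fm p (\<lambda>i. d i + c i)"
  by (rule ext) (simp add: Fm_comp)

lemma Fm_zero: "Fm p (\<lambda>i. 0) = id"
  by (rule ext) (simp add: Fm_def rot_0)

lemma Fm_pos: "0 < x \<Longrightarrow> 0 < Fm p c x"
  by (simp add: Fm_def rot_pos)
lemma Fm_ge1: "1 \<le> x \<Longrightarrow> 1 \<le> Fm p c x"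
  using Fm_pos[of x p c] by simp
lemma Fm_0: "Fm p c 0 = 0" by (simp add: Fm_def)
lemma Fm_blk: "0 < p \<Longrightarrow> 1 \<le> x \<Longrightarrow> blk p (Fm p c x) = blk p x"
  by (simp add: Fm_def blk_rot)

lemma Fm_modp: "\<forall>i. c i mod p = 0 \<Longrightarrow> Fm p c x = x"
  by (simp add: Fm_def rot_modp)

lemma inv_mod: "0 < p \<Longrightarrow> ((c::nat) + (p - c mod p)) mod p = 0 \<and> ((p - c mod p) + c) mod p = 0"
proof -
  assume p: "0 < p"
  have "c mod p < p" using p by simp
  have "c = c div p * p + c mod p" by simp
  hence "c + (p - c mod p) = c div p * p + p" using \<open>c mod p < p\<close> by linarith
  hence "c + (p - c mod p) = (c div p + 1) * p" by simp
  hence "(c + (p - c mod p)) mod p = 0" by (simp only: mod_mult_self2_is_0 mod_mult_self1_is_0)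
  thus ?thesis by (simp add: add.commute)
qed

lemma Fm_inv: "0 < p \<Longrightarrow> Fm p (\<lambda>i. p - c i mod p) (Fm p c x) = x"
  using Fm_comp[of p] inv_mod[of p] Fm_modp by simp

lemma Fm_inv2: "0 < p \<Longrightarrow> Fm p c (Fm p (\<lambda>i. p - c i mod p) x) = x"
  using Fm_comp[of p] inv_mod[of p] Fm_modp by simp

lemma Fm_inj: "0 < p \<Longrightarrow> inj (Fm p c)"
  by (metis Fm_inv injI)

lemma Fm_range: "0 < p \<Longrightarrow> Fm p c x \<in> {1..n*p} \<longleftrightarrow> x \<in> {1..n*p}"
proof -
  assume p: "0 < p"
  show ?thesis
  proof (cases "x = 0")
    case True thus ?thesis by (simp add: Fm_0)
  next
    case False
    hence "1 \<le> x" by simp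
    thus ?thesis using range_iff[OF p, of x n] range_iff[OF p, of "Fm p c x" n] Fm_ge1[of x p c] Fm_blk[OF p, of x c] by simp
  qed
qed

lemma Fm_image_range: "0 < p \<Longrightarrow> Fm p c ` {1..n*p} = {1..n*p}"
proof
  assume p: "0 < p"
  show "Fm p c ` {1..n*p} \<subseteq> {1..n*p}" using Fm_range[OF p] by blast
  show "{1..n*p} \<subseteq> Fm p c ` {1..n*p}"
  proof
    fix y assume y: "y \<in> {1..n*p}"
    have "y = Fm p c (Fm p (\<lambda>i. p - c i mod p) y)" using Fm_inv2[OF p] by simp
    moreover have "Fm p (\<lambda>i. p - c i mod p) y \<in> {1..n*p}" using y Fm_range[OF p] by blast
    ultimately show "y \<in> Fm p c ` {1..n*p}" by blast
  qed
qed

lemma Fm_orb: "0 < p \<Longrightarrow> 1 \<le> j \<Longrightarrow> Fm p c x \<in> orb p j \<longleftrightarrow> x \<in> orb p j"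
  by (cases "x = 0") (auto simp: orb_iff Fm_0 Fm_pos Fm_blk Suc_le_eq)

lemma Fm_card_orb: "0 < p \<Longrightarrow> 1 \<le> j \<Longrightarrow> card (Fm p c ` B \<inter> orb p j) = card (B \<inter> orb p j)"
proof -
  assume p: "0 < p" and j: "1 \<le> j"
  have "Fm p c ` B \<inter> orb p j = Fm p c ` (B \<inter> orb p j)" using Fm_orb[OF p j] by auto
  thus ?thesis using Fm_inj[OF p, of c] by (metis card_image inj_on_subset subset_UNIV)
qed


lemma zcyc_Fm: assumes p: "0 < p" shows "zcyc p j = Fm p (\<lambda>i. if i = j then 1 else 0)"
proof (rule ext)
  fix x
  show "zcyc p j x = Fm p (\<lambda>i. if i = j then 1 else 0) x"
  proof (cases "x \<in> orb p j")
    case True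
    have j0: "j \<noteq> 0"
    proof
      assume "j = 0"
      hence "orb p j = {}" by (simp add: orb_def)
      thus False using True by simp
    qed
    then obtain j' where jj: "j = Suc j'" using not0_implies_Suc by blast
    have j: "1 \<le> j" using jj by simp
    from True have x1: "p*(j-1) + 1 \<le> x" "x \<le> p*j" by (auto simp: orb_def)
    define t where "t = x - 1 - p*(j-1)"
    have xt: "x - 1 = t + p*(j-1)" using x1 unfolding t_def by linarith
    have pj: "p*j = p*(j-1) + p" using jj by simp
    have tp: "t < p" using x1 pj unfolding t_def by linarith
    have dv: "(x-1) div p = j - 1" using xt tp by simp
    have md: "(x-1) mod p = t" using xt tp by simp
    have bx: "blk p x = j" using dv j by (simp add: blk_def)
    have x0: "x \<noteq> 0" using x1 by simp
    have "Fm p (\<lambda>i. if i = j then 1 else 0) x = p*(j-1) + (t + 1) mod p + 1"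
      using x0 bx dv md by (simp add: Fm_def rot_def)
    moreover have "zcyc p j x = (if x = p*j then p*(j-1)+1 else Suc x)" using True by (simp add: zcyc_def)
    moreover have "x = p*j \<longleftrightarrow> t + 1 = p" using x1 pj unfolding t_def by linarith
    moreover have "t + 1 < p \<Longrightarrow> p*(j-1) + (t+1) + 1 = Suc x" using x1 unfolding t_def by linarith
    ultimately show ?thesis using tp by (cases "t + 1 = p") auto
  next
    case False
    hence "zcyc p j x = x" by (simp add: zcyc_def)
    moreover have "Fm p (\<lambda>i. if i = j then 1 else 0) x = x"
    proof (cases "x = 0")
      case True thus ?thesis by (simp add: Fm_def)
    next
      case x0: False
      have "blk p x \<noteq> j"
      proof (cases "j = 0")
        case True thus ?thesis by (simp add: blk_def)
      next
        case False thus ?thesis using orb_iff[OF p, of j x] x0 \<open>x \<notin> orb p j\<close> by simp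
      qed
      thus ?thesis using x0 by (simp add: Fm_def rot_0)
    qed
    ultimately show ?thesis by simp
  qed
qed

lemma foldr_sigma: "0 < p \<Longrightarrow> foldr (\<lambda>j f. zcyc p j \<circ> f) xs id = Fm p (count_list xs)"
proof (induction xs)
  case Nil thus ?case using Fm_zero[of p] by (simp add: fun_eq_iff)
next
  case (Cons j xs)
  have "foldr (\<lambda>j f. zcyc p j \<circ> f) (j # xs) id = zcyc p j \<circ> foldr (\<lambda>j f. zcyc p j \<circ> f) xs id"
    by (simp only: foldr.simps comp_apply)
  also have "\<dots> = zcyc p j \<circ> Fm p (count_list xs)"
    by (simp only: Cons.IH[OF Cons.prems])
  also have "\<dots> = Fm p (count_list (j # xs))"
    unfolding zcyc_Fm[OF Cons.prems] Fm_comp_fun[OF Cons.prems]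
    by (rule arg_cong[where f="Fm p"]) (auto simp: fun_eq_iff)
  finally show ?case .
qed

lemma count_upt: "count_list [1..<Suc n] i = (if 1 \<le> i \<and> i \<le> n then 1 else 0)"
  by (induction n) auto

definition sc :: "nat \<Rightarrow> nat \<Rightarrow> nat \<Rightarrow> nat" where
  "sc n k i = (if 1 \<le> i \<and> i \<le> n then k else 0)"

lemma sigma_pow: "0 < p \<Longrightarrow> sigma p n ^^ k = Fm p (sc n k)"
proof (induction k)
  case 0 thus ?case using Fm_zero[of p] by (simp add: sc_def)
next
  case (Suc k)
  have s0: "sigma p n = Fm p (count_list [1..<Suc n])"
    by (simp only: sigma_def foldr_sigma[OF Suc.prems])
  have "count_list [1..<Suc n] = sc n 1"
    by (rule ext) (simp only: count_upt sc_def)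
  hence s: "sigma p n = Fm p (sc n 1)" using s0 by simp
  have e: "(\<lambda>i. sc n k i + sc n 1 i) = sc n (Suc k)" by (auto simp: sc_def fun_eq_iff)
  have "sigma p n ^^ Suc k = sigma p n \<circ> sigma p n ^^ k" by simp
  also have "\<dots> = Fm p (sc n 1) \<circ> Fm p (sc n k)" by (subst Suc.IH[OF Suc.prems]) (simp only: s)
  also have "\<dots> = Fm p (sc n (Suc k))" by (simp only: Fm_comp_fun[OF Suc.prems] e)
  finally show ?case .
qed

lemma Cgrp_Fm: "0 < p \<Longrightarrow> g \<in> Cgrp p n \<Longrightarrow> \<exists>c. g = Fm p c"
proof -
  assume p: "0 < p" and g: "g \<in> Cgrp p n"
  then obtain k where gk: "g = foldr (\<lambda>j f. (zcyc p j ^^ k j) \<circ> f) [1..<Suc n] id"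
    by (auto simp: Cgrp_def)
  have zp: "zcyc p j ^^ m = Fm p (\<lambda>i. if i = j then m else 0)" for j m
  proof (induction m)
    case 0 thus ?case using Fm_zero[of p] by simp
  next
    case (Suc m)
    have e: "(\<lambda>i. (if i = j then m else 0) + (if i = j then 1 else 0)) = (\<lambda>i. if i = j then Suc m else 0)"
      by auto
    have "zcyc p j ^^ Suc m = zcyc p j \<circ> zcyc p j ^^ m" by simp
    also have "\<dots> = Fm p (\<lambda>i. if i = j then 1 else 0) \<circ> Fm p (\<lambda>i. if i = j then m else 0)"
      by (subst Suc.IH) (simp only: zcyc_Fm[OF p])
    also have "\<dots> = Fm p (\<lambda>i. if i = j then Suc m else 0)"
      by (simp only: Fm_comp_fun[OF p] e)
    finally show ?case .
  qed
  have "\<exists>c. foldr (\<lambda>j f. (zcyc p j ^^ k j) \<circ> f) xs id = Fm p c" for xs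
  proof (induction xs)
    case Nil thus ?case using Fm_zero[of p] by (metis foldr.simps(1) id_apply)
  next
    case (Cons j xs)
    then obtain c where "foldr (\<lambda>j f. (zcyc p j ^^ k j) \<circ> f) xs id = Fm p c" by blast
    hence "foldr (\<lambda>j f. (zcyc p j ^^ k j) \<circ> f) (j # xs) id = Fm p (\<lambda>i. if i = j then k j else 0) \<circ> Fm p c"
      by (simp only: foldr.simps comp_apply zp)
    thus ?case by (simp only: Fm_comp_fun[OF p]) blast
  qed
  thus ?thesis using gk by blast
qed



lemma act_part_comp: "act_part f (act_part g \<omega>) = act_part (f \<circ> g) \<omega>"
  by (simp add: act_part_def image_image image_comp)

lemma Fm_commute: "0 < p \<Longrightarrow> Fm p c \<circ> Fm p d = Fm p d \<circ> Fm p c"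
  by (simp add: Fm_comp_fun add.commute)

lemma Rgrp_Fm: "0 < p \<Longrightarrow> h \<in> Rgrp p n \<Longrightarrow> \<exists>k. h = Fm p (sc n k)"
  by (auto simp: Rgrp_def sigma_pow)

lemma C_fix:
  assumes p: "0 < p" and w: "\<omega> \<in> fixparts p a s"
  shows "act_part (Fm p c) \<omega> \<in> fixparts p a s"
proof -
  let ?g = "Fm p c"
  have P: "partition_on {1..a*s*p} \<omega>" and cw: "card \<omega> = s*p" and cb: "\<forall>B\<in>\<omega>. card B = a"
    and fx: "\<forall>h\<in>Rgrp p (a*s). act_part h \<omega> = \<omega>"
    using w by (auto simp: fixparts_def setparts_def)
  have inj: "inj ?g" using Fm_inj[OF p] .
  have rng: "?g ` {1..a*s*p} = {1..a*s*p}" using Fm_image_range[OF p, of c "a*s"] by simp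
  have "partition_on (?g ` {1..a*s*p}) ((`) ?g ` \<omega> - {{}})"
    by (rule partition_on_inj_image[OF P]) (rule inj_on_subset[OF inj], simp)
  moreover have "(`) ?g ` \<omega> - {{}} = act_part ?g \<omega>"
    using partition_onD3[OF P] by (auto simp: act_part_def)
  ultimately have P': "partition_on {1..a*s*p} (act_part ?g \<omega>)" using rng by simp
  have injI: "inj ((`) ?g)" using inj by (simp add: inj_def inj_image_eq_iff)
  have "card (act_part ?g \<omega>) = card \<omega>" unfolding act_part_def
    by (rule card_image) (rule inj_on_subset[OF injI], simp)
  moreover have "\<forall>B\<in>act_part ?g \<omega>. card B = a"
    using cb inj by (auto simp: act_part_def card_image inj_on_subset)
  moreover have "\<forall>h\<in>Rgrp p (a*s). act_part h (act_part ?g \<omega>) = act_part ?g \<omega>"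
  proof
    fix h assume "h \<in> Rgrp p (a*s)"
    then obtain k where hk: "h = Fm p (sc (a*s) k)" using Rgrp_Fm[OF p] by blast
    have "act_part h (act_part ?g \<omega>) = act_part (?g \<circ> h) \<omega>"
      by (simp add: act_part_comp hk Fm_commute[OF p])
    also have "\<dots> = act_part ?g (act_part h \<omega>)" by (simp add: act_part_comp)
    also have "\<dots> = act_part ?g \<omega>" using fx \<open>h \<in> Rgrp p (a*s)\<close> by simp
    finally show "act_part h (act_part ?g \<omega>) = act_part ?g \<omega>" .
  qed
  ultimately show ?thesis using P' cw by (simp add: fixparts_def setparts_def)
qed

lemma C_type:
  assumes p: "0 < p" and t: "has_type p a s \<delta> \<omega>"
  shows "has_type p a s \<delta> (act_part (Fm p c) \<omega>)"
proof -
  let ?g = "Fm p c"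
  obtain A where A1: "\<forall>D\<in>\<delta>. \<forall>j\<ge>1. card (A D \<inter> orb p j) = (if j \<in> D then 1 else 0)"
    and A2: "\<omega> = {(sigma p (a*s) ^^ k) ` (A D) | D k. D \<in> \<delta> \<and> k \<le> p - 1}"
    using t unfolding has_type_def by blast
  have com: "?g ` ((sigma p (a*s) ^^ k) ` X) = (sigma p (a*s) ^^ k) ` (?g ` X)" for k X
  proof -
    have "?g \<circ> (sigma p (a*s) ^^ k) = (sigma p (a*s) ^^ k) \<circ> ?g"
      by (simp add: sigma_pow[OF p] Fm_commute[OF p])
    thus ?thesis by (simp only: image_comp)
  qed
  have "\<forall>D\<in>\<delta>. \<forall>j\<ge>1. card ((?g ` A D) \<inter> orb p j) = (if j \<in> D then 1 else 0)"
  proof (intro ballI allI impI)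
    fix D j assume "D \<in> \<delta>" "1 \<le> (j::nat)"
    thus "card ((?g ` A D) \<inter> orb p j) = (if j \<in> D then 1 else 0)"
      using A1 Fm_card_orb[OF p, of j c "A D"] by simp
  qed
  moreover have "act_part ?g \<omega> = {(sigma p (a*s) ^^ k) ` ((?g ` A D)) | D k. D \<in> \<delta> \<and> k \<le> p - 1}"
  proof
    show "act_part ?g \<omega> \<subseteq> {(sigma p (a*s) ^^ k) ` ((?g ` A D)) | D k. D \<in> \<delta> \<and> k \<le> p - 1}"
    proof
      fix B assume "B \<in> act_part ?g \<omega>"
      then obtain C where C: "C \<in> \<omega>" "B = ?g ` C" by (auto simp: act_part_def)
      obtain D k where "C = (sigma p (a*s) ^^ k) ` (A D)" "D \<in> \<delta>" "k \<le> p - 1"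
        using C(1) unfolding A2 by blast
      hence "B = (sigma p (a*s) ^^ k) ` ((?g ` A D)) \<and> D \<in> \<delta> \<and> k \<le> p - 1" using C com by simp
      thus "B \<in> {(sigma p (a*s) ^^ k) ` ((?g ` A D)) | D k. D \<in> \<delta> \<and> k \<le> p - 1}" by blast
    qed
    show "{(sigma p (a*s) ^^ k) ` ((?g ` A D)) | D k. D \<in> \<delta> \<and> k \<le> p - 1} \<subseteq> act_part ?g \<omega>"
    proof
      fix B assume "B \<in> {(sigma p (a*s) ^^ k) ` ((?g ` A D)) | D k. D \<in> \<delta> \<and> k \<le> p - 1}"
      then obtain D k where B: "B = (sigma p (a*s) ^^ k) ` ((?g ` A D))" "D \<in> \<delta>" "k \<le> p - 1" by blast
      have "(sigma p (a*s) ^^ k) ` (A D) \<in> \<omega>" unfolding A2 using B(2,3) by blast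
      moreover have "B = ?g ` ((sigma p (a*s) ^^ k) ` (A D))" using B com by simp
      ultimately show "B \<in> act_part ?g \<omega>" by (auto simp: act_part_def)
    qed
  qed
  ultimately show ?thesis unfolding has_type_def by (intro exI[of _ "\<lambda>D. ?g ` A D"] conjI)
qed



lemma blk_ge1: "1 \<le> blk p x" by (simp add: blk_def)

lemma blk_S: "0 < p \<Longrightarrow> X \<subseteq> {1..} \<Longrightarrow> blk p ` (Fm p c ` X) = blk p ` X"
proof -
  assume p: "0 < p" and X: "X \<subseteq> {1..}"
  have "blk p ` (Fm p c ` X) = (blk p \<circ> Fm p c) ` X" by (simp add: image_comp)
  also have "\<dots> = blk p ` X"
    by (rule image_cong[OF refl]) (use X Fm_blk[OF p] in auto)
  finally show ?thesis .
qed

lemma type_unique: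
  assumes p: "0 < p" and w: "\<omega> \<in> fixparts p a s" and d: "\<delta> \<in> setparts (a*s) s a"
    and t: "has_type p a s \<delta> \<omega>"
  shows "\<delta> = (\<lambda>B. blk p ` B) ` \<omega>"
proof -
  obtain A where A1: "\<forall>D\<in>\<delta>. \<forall>j\<ge>1. card (A D \<inter> orb p j) = (if j \<in> D then 1 else 0)"
    and A2: "\<omega> = {(sigma p (a*s) ^^ k) ` (A D) | D k. D \<in> \<delta> \<and> k \<le> p - 1}"
    using t unfolding has_type_def by blast
  have P: "partition_on {1..a*s*p} \<omega>" using w by (auto simp: fixparts_def setparts_def)
  have Pd: "partition_on {1..a*s} \<delta>" using d by (auto simp: setparts_def)
  have AD: "D \<in> \<delta> \<Longrightarrow> A D \<in> \<omega>" for D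
    unfolding A2 by (rule CollectI, rule exI[of _ D], rule exI[of _ 0]) simp
  have ADs: "D \<in> \<delta> \<Longrightarrow> A D \<subseteq> {1..}" for D
    using AD partition_onD1[OF P] by auto
  have bA: "D \<in> \<delta> \<Longrightarrow> blk p ` A D = D" for D
  proof
    assume D: "D \<in> \<delta>"
    show "blk p ` A D \<subseteq> D"
    proof
      fix j assume "j \<in> blk p ` A D"
      then obtain x where x: "x \<in> A D" "blk p x = j" by blast
      have x1: "1 \<le> x" using x ADs[OF D] by auto
      have j1: "1 \<le> j" using x blk_ge1 by metis
      have "x \<in> A D \<inter> orb p j" using x x1 orb_iff[OF p j1] by simp
      moreover have "finite (orb p j)" by (simp add: orb_def)
      ultimately have "card (A D \<inter> orb p j) \<noteq> 0" by auto
      thus "j \<in> D" using A1 D j1 by (auto split: if_splits)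
    qed
    show "D \<subseteq> blk p ` A D"
    proof
      fix j assume j: "j \<in> D"
      have j1: "1 \<le> j" using j D partition_onD1[OF Pd] by auto
      have "card (A D \<inter> orb p j) = 1" using A1 D j j1 by simp
      then obtain x where "x \<in> A D \<inter> orb p j" by (metis card_1_singletonE insertI1)
      thus "j \<in> blk p ` A D" using orb_iff[OF p j1] by auto
    qed
  qed
  show ?thesis
  proof
    show "\<delta> \<subseteq> (\<lambda>B. blk p ` B) ` \<omega>" using AD bA by (metis image_eqI subsetI)
    show "(\<lambda>B. blk p ` B) ` \<omega> \<subseteq> \<delta>"
    proof
      fix E assume "E \<in> (\<lambda>B. blk p ` B) ` \<omega>"
      then obtain D k where D: "D \<in> \<delta>" and E: "E = blk p ` ((sigma p (a*s) ^^ k) ` A D)"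
        unfolding A2 by blast
      have "E = blk p ` A D" unfolding E sigma_pow[OF p] using blk_S[OF p ADs[OF D]] .
      thus "E \<in> \<delta>" using bA D by simp
    qed
  qed
qed



lemma type_exists:
  assumes pr: "prime p" and ap: "a < p" and w: "\<omega> \<in> fixparts p a s"
  shows "\<exists>\<delta>\<in>setparts (a*s) s a. has_type p a s \<delta> \<omega>"
proof -
  have p: "0 < p" using pr prime_gt_0_nat by blast
  define n where "n = a*s"
  define S where "S k = Fm p (sc n k)" for k
  have P: "partition_on {1..n*p} \<omega>" and cw: "card \<omega> = s*p" and cb: "\<forall>B\<in>\<omega>. card B = a"
    and fx: "\<forall>h\<in>Rgrp p n. act_part h \<omega> = \<omega>"
    using w by (auto simp: fixparts_def setparts_def n_def)
  have inv: "B \<in> \<omega> \<Longrightarrow> S k ` B \<in> \<omega>" for B k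
  proof -
    assume B: "B \<in> \<omega>"
    have "sigma p n ^^ k \<in> Rgrp p n" by (simp add: Rgrp_def)
    hence "act_part (S k) \<omega> = \<omega>" using fx by (simp add: S_def sigma_pow[OF p])
    thus ?thesis using B unfolding act_part_def by blast
  qed
  have Bsub: "B \<in> \<omega> \<Longrightarrow> B \<subseteq> {1..n*p}" for B using partition_onD1[OF P] by auto
  have Bfin: "B \<in> \<omega> \<Longrightarrow> finite B" for B using Bsub finite_subset by blast
  have Srot: "x \<in> {1..n*p} \<Longrightarrow> S k x = rot p k x" for x k
    using range_iff[OF p, of x n] by (auto simp: S_def Fm_def sc_def blk_ge1[simplified])
  have disj: "B \<in> \<omega> \<Longrightarrow> B' \<in> \<omega> \<Longrightarrow> x \<in> B \<Longrightarrow> x \<in> B' \<Longrightarrow> B = B'" for B B' x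
    using partition_onD2[OF P] by (auto simp: disjoint_def)
  have Smul: "S k ` B = B \<Longrightarrow> S (k*m) ` B = B" for k m B
  proof (induction m)
    case 0
    have "sc n (k*0) = (\<lambda>i. 0)" by (simp add: sc_def fun_eq_iff)
    thus ?case using Fm_zero[of p] by (simp add: S_def)
  next
    case (Suc m)
    have e: "(\<lambda>i. sc n (k*m) i + sc n k i) = sc n (k * Suc m)" by (auto simp: sc_def fun_eq_iff)
    have "S (k * Suc m) = S k \<circ> S (k*m)" unfolding S_def Fm_comp_fun[OF p] e ..
    hence "S (k * Suc m) ` B = S k ` (S (k*m) ` B)" by (simp add: image_comp)
    thus ?case using Suc by simp
  qed
  have E1: "B \<in> \<omega> \<Longrightarrow> x \<in> B \<Longrightarrow> y \<in> B \<Longrightarrow> blk p x = blk p y \<Longrightarrow> x = y" for B x y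
  proof (rule ccontr)
    assume B: "B \<in> \<omega>" and x: "x \<in> B" and y: "y \<in> B" and b: "blk p x = blk p y" and ne: "x \<noteq> y"
    have xr: "x \<in> {1..n*p}" "y \<in> {1..n*p}" using Bsub[OF B] x y by auto
    obtain k where k: "k < p" "rot p k x = y" using rot_exists[OF p, of y x] xr b by auto
    have "k \<noteq> 0"
    proof
      assume "k = 0"
      hence "rot p k x = x" using rot_0[of x p] xr by simp
      thus False using k ne by simp
    qed
    hence nd: "\<not> p dvd k" using k by (auto dest: dvd_imp_le)
    have "y = S k x" using Srot[OF xr(1)] k by simp
    hence "y \<in> S k ` B" using x by blast
    hence SB: "S k ` B = B" using disj[OF inv[OF B] B _ y] by simp
    have "(\<lambda>m. rot p (k*m) x) ` {..<p} \<subseteq> B"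
    proof
      fix z assume "z \<in> (\<lambda>m. rot p (k*m) x) ` {..<p}"
      then obtain m where z: "z = rot p (k*m) x" by blast
      have "z = S (k*m) x" using Srot[OF xr(1)] z by simp
      thus "z \<in> B" using Smul[OF SB, of m] x by blast
    qed
    moreover have "inj_on (\<lambda>m. rot p (k*m) x) {..<p}"
      by (rule inj_onI) (use rot_inj_mult[OF pr nd] xr in auto)
    ultimately have "card ((\<lambda>m. rot p (k*m) x) ` {..<p}) \<le> card B" and
      "card ((\<lambda>m. rot p (k*m) x) ` {..<p}) = card {..<p}"
      using card_mono[OF Bfin[OF B]] card_image by blast+
    hence "card {..<p} \<le> card B" by simp
    thus False using cb B ap by simp
  qed
  have E2: "B \<in> \<omega> \<Longrightarrow> B' \<in> \<omega> \<Longrightarrow> x \<in> B \<Longrightarrow> y \<in> B' \<Longrightarrow> blk p x = blk p y \<Longrightarrow> \<exists>k<p. B' = S k ` B"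
    for B B' x y
  proof -
    assume B: "B \<in> \<omega>" and B': "B' \<in> \<omega>" and x: "x \<in> B" and y: "y \<in> B'" and b: "blk p x = blk p y"
    have xr: "x \<in> {1..n*p}" "y \<in> {1..n*p}" using Bsub[OF B] Bsub[OF B'] x y by auto
    obtain k where k: "k < p" "rot p k x = y" using rot_exists[OF p, of y x] xr b by auto
    have "y = S k x" using Srot[OF xr(1)] k by simp
    hence "y \<in> S k ` B" using x by blast
    hence "S k ` B = B'" using disj[OF inv[OF B] B' _ y] by simp
    thus ?thesis using k by blast
  qed
  have bS: "B \<in> \<omega> \<Longrightarrow> blk p ` (S k ` B) = blk p ` B" for B k
  proof -
    assume B: "B \<in> \<omega>"
    have "B \<subseteq> {1..}" using Bsub[OF B] by auto
    thus ?thesis unfolding S_def by (rule blk_S[OF p])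
  qed
  define \<delta> where "\<delta> = (\<lambda>B. blk p ` B) ` \<omega>"
  have ne: "B \<in> \<omega> \<Longrightarrow> B \<noteq> {}" for B using partition_onD3[OF P] by auto
  have U: "\<Union>\<delta> = {1..n}"
  proof
    show "\<Union>\<delta> \<subseteq> {1..n}"
    proof
      fix j assume "j \<in> \<Union>\<delta>"
      then obtain B x where Bx: "B \<in> \<omega>" "x \<in> B" "j = blk p x" unfolding \<delta>_def by blast
      have "x \<in> {1..n*p}" using Bsub[OF Bx(1)] Bx(2) by blast
      thus "j \<in> {1..n}" using Bx(3) range_iff[OF p, of x n] blk_ge1[of p x] by auto
    qed
    show "{1..n} \<subseteq> \<Union>\<delta>"
    proof
      fix j assume j: "j \<in> {1..n}"
      define x where "x = p*(j-1) + 1"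
      have pj: "p*j = p*(j-1) + p" using j by (cases j) auto
      have "x \<in> orb p j" unfolding x_def orb_def using pj p by simp
      hence xb: "1 \<le> x" "blk p x = j" using orb_iff[OF p, of j x] j by auto
      hence "x \<in> {1..n*p}" using range_iff[OF p] j by auto
      moreover have "\<Union>\<omega> = {1..n*p}" using partition_onD1[OF P] by simp
      ultimately have "x \<in> \<Union>\<omega>" by simp
      then obtain B where "B \<in> \<omega>" "x \<in> B" by blast
      thus "j \<in> \<Union>\<delta>" using xb unfolding \<delta>_def by blast
    qed
  qed
  have Dj: "disjoint \<delta>"
  proof (rule disjointI)
    fix D D' assume D: "D \<in> \<delta>" and D': "D' \<in> \<delta>" and neq: "D \<noteq> D'"
    show "D \<inter> D' = {}"
    proof (rule ccontr)
      assume "D \<inter> D' \<noteq> {}"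
      then obtain j where j: "j \<in> D" "j \<in> D'" by blast
      obtain B where B: "B \<in> \<omega>" "D = blk p ` B" using D unfolding \<delta>_def by blast
      obtain B' where B': "B' \<in> \<omega>" "D' = blk p ` B'" using D' unfolding \<delta>_def by blast
      obtain x where x: "x \<in> B" "blk p x = j" using j B by blast
      obtain y where y: "y \<in> B'" "blk p y = j" using j B' by blast
      obtain k where "B' = S k ` B" using E2[OF B(1) B'(1) x(1) y(1)] x y by auto
      hence "D' = D" using B B' bS by simp
      thus False using neq by simp
    qed
  qed
  have Dne: "{} \<notin> \<delta>" using ne unfolding \<delta>_def by auto
  have Pd: "partition_on {1..n} \<delta>" using U Dj Dne by (simp add: partition_on_def)
  have cD: "\<forall>D\<in>\<delta>. card D = a"
  proof
    fix D assume "D \<in> \<delta>"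
    then obtain B where B: "B \<in> \<omega>" "D = blk p ` B" unfolding \<delta>_def by blast
    have "inj_on (blk p) B" using E1[OF B(1)] by (auto intro: inj_onI)
    thus "card D = a" using B cb card_image by metis
  qed
  have card\<delta>: "card \<delta> = s"
  proof (cases "a = 0")
    case True
    have "\<omega> = {}"
    proof (rule ccontr)
      assume "\<omega> \<noteq> {}"
      then obtain B where B: "B \<in> \<omega>" by blast
      thus False using ne[OF B] Bfin[OF B] cb True by auto
    qed
    thus ?thesis using cw p \<delta>_def by simp
  next
    case False
    have "card {1..n} = (\<Sum>D\<in>\<delta>. card D)"
    proof (rule product_partition[OF Pd])
      fix D assume "D \<in> \<delta>"
      hence "D \<subseteq> {1..n}" using U by blast
      thus "finite D" using finite_subset by blast
    qed
    also have "\<dots> = card \<delta> * a" using cD by simp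
    finally have "a * s = card \<delta> * a" by (simp add: n_def)
    thus ?thesis using False by simp
  qed
  have \<delta>S: "\<delta> \<in> setparts (a*s) s a"
    using Pd card\<delta> cD by (simp add: setparts_def n_def)
  define A where "A D = (SOME B. B \<in> \<omega> \<and> blk p ` B = D)" for D
  have A: "D \<in> \<delta> \<Longrightarrow> A D \<in> \<omega> \<and> blk p ` A D = D" for D
    unfolding A_def by (rule someI_ex) (auto simp: \<delta>_def)
  have T1: "\<forall>D\<in>\<delta>. \<forall>j\<ge>1. card (A D \<inter> orb p j) = (if j \<in> D then 1 else 0)"
  proof (intro ballI allI impI)
    fix D j assume D: "D \<in> \<delta>" and j1: "1 \<le> (j::nat)"
    have AD: "A D \<in> \<omega>" "blk p ` A D = D" using A[OF D] by auto
    have ge: "\<forall>x\<in>A D. 1 \<le> x" using Bsub[OF AD(1)] by auto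
    have eq: "A D \<inter> orb p j = {x \<in> A D. blk p x = j}"
    proof (intro equalityI subsetI)
      fix x assume "x \<in> A D \<inter> orb p j" thus "x \<in> {x \<in> A D. blk p x = j}"
        using orb_iff[OF p j1, of x] by simp
    next
      fix x assume x: "x \<in> {x \<in> A D. blk p x = j}"
      hence "1 \<le> x" using ge by simp
      thus "x \<in> A D \<inter> orb p j" using orb_iff[OF p j1, of x] x by simp
    qed
    show "card (A D \<inter> orb p j) = (if j \<in> D then 1 else 0)"
    proof (cases "j \<in> D")
      case True
      hence "j \<in> blk p ` A D" using AD(2) by simp
      then obtain x where x: "x \<in> A D" "blk p x = j" by blast
      have "{x \<in> A D. blk p x = j} = {x}"
      proof (intro equalityI subsetI)
        fix y assume "y \<in> {x \<in> A D. blk p x = j}"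
        hence "y \<in> A D" "blk p x = blk p y" using x by auto
        hence "x = y" by (rule E1[OF AD(1) x(1)])
        thus "y \<in> {x}" by simp
      qed (use x in simp)
      thus ?thesis using eq True by simp
    next
      case False
      have e0: "{x \<in> A D. blk p x = j} = {}"
      proof (rule ccontr)
        assume "{x \<in> A D. blk p x = j} \<noteq> {}"
        then obtain y where "y \<in> A D" "blk p y = j" by blast
        hence "j \<in> blk p ` A D" by blast
        thus False using AD(2) False by simp
      qed
      show ?thesis unfolding eq e0 using False by simp
    qed
  qed
  have T2: "\<omega> = {(sigma p (a*s) ^^ k) ` (A D) | D k. D \<in> \<delta> \<and> k \<le> p - 1}"
  proof
    show "{(sigma p (a*s) ^^ k) ` (A D) | D k. D \<in> \<delta> \<and> k \<le> p - 1} \<subseteq> \<omega>"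
    proof
      fix B assume "B \<in> {(sigma p (a*s) ^^ k) ` (A D) | D k. D \<in> \<delta> \<and> k \<le> p - 1}"
      then obtain D k where B: "B = (sigma p (a*s) ^^ k) ` (A D)" "D \<in> \<delta>" by blast
      have "sigma p (a*s) ^^ k = S k" by (simp add: sigma_pow[OF p] S_def n_def)
      hence "B = S k ` A D" using B(1) by simp
      thus "B \<in> \<omega>" using inv A[OF B(2)] by blast
    qed
    show "\<omega> \<subseteq> {(sigma p (a*s) ^^ k) ` (A D) | D k. D \<in> \<delta> \<and> k \<le> p - 1}"
    proof
      fix B assume B: "B \<in> \<omega>"
      then obtain x where x: "x \<in> B" using ne by blast
      define D where "D = blk p ` B"
      have D: "D \<in> \<delta>" using B unfolding D_def \<delta>_def by blast
      have AD: "A D \<in> \<omega>" "blk p ` A D = D" using A[OF D] by auto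
      have "blk p x \<in> D" unfolding D_def using x by blast
      hence "blk p x \<in> blk p ` A D" using AD(2) by simp
      then obtain y where y: "y \<in> A D" "blk p y = blk p x" by (metis imageE)
      obtain k where k: "k < p" "B = S k ` A D" using E2[OF AD(1) B y(1) x(1) y(2)] by blast
      have "sigma p (a*s) ^^ k = S k" by (simp add: sigma_pow[OF p] S_def n_def)
      hence "B = (sigma p (a*s) ^^ k) ` (A D) \<and> D \<in> \<delta> \<and> k \<le> p - 1"
        using D k by simp
      thus "B \<in> {(sigma p (a*s) ^^ k) ` (A D) | D k. D \<in> \<delta> \<and> k \<le> p - 1}" by blast
    qed
  qed
  have "has_type p a s \<delta> \<omega>" unfolding has_type_def using T1 T2 by (intro exI[of _ A] conjI)
  thus ?thesis using \<delta>S by blast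
qed



lemma finite_setparts: "finite (setparts N m a)"
proof -
  have "setparts N m a \<subseteq> {P. partition_on {1..N} P}" by (auto simp: setparts_def)
  moreover have "finite {P. partition_on {1..N} P}" by (rule finitely_many_partition_on) simp
  ultimately show ?thesis by (rule finite_subset)
qed

lemma type_same:
  assumes p: "0 < p" and w: "\<omega> \<in> fixparts p a s"
    and d1: "\<delta>1 \<in> setparts (a*s) s a" and t1: "has_type p a s \<delta>1 \<omega>"
    and d2: "\<delta>2 \<in> setparts (a*s) s a" and t2: "has_type p a s \<delta>2 \<omega>"
  shows "\<delta>1 = \<delta>2"
  using type_unique[OF p w d1 t1] type_unique[OF p w d2 t2] by simp

theorem proposition3p4:
  fixes p a s :: nat
  assumes "prime p" and "odd p" and "CHAR('f::field) = p" and "a < p"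
  shows
    "(\<forall>\<delta>\<in>setparts (a*s) s a. \<forall>g\<in>Cgrp p (a*s). \<forall>v\<in>(Kdelta p a s \<delta> :: (nat set set \<Rightarrow> 'f) set).
        act_vec p a s g v \<in> Kdelta p a s \<delta>)
     \<and> (\<forall>v\<in>(Hbr p a s :: (nat set set \<Rightarrow> 'f) set). \<exists>u. (\<forall>\<delta>\<in>setparts (a*s) s a. u \<delta> \<in> Kdelta p a s \<delta>)
           \<and> v = (\<lambda>\<omega>. \<Sum>\<delta>\<in>setparts (a*s) s a. u \<delta> \<omega>))
     \<and> (\<forall>u :: nat set set \<Rightarrow> nat set set \<Rightarrow> 'f. (\<forall>\<delta>\<in>setparts (a*s) s a. u \<delta> \<in> Kdelta p a s \<delta>)
           \<and> (\<forall>\<omega>. (\<Sum>\<delta>\<in>setparts (a*s) s a. u \<delta> \<omega>) = 0) \<longrightarrow> (\<forall>\<delta>\<in>setparts (a*s) s a. \<forall>\<omega>. u \<delta> \<omega> = 0))"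
proof (intro conjI)
  have pr: "prime p" by fact
  have p: "0 < p" using pr prime_gt_0_nat by blast
  let ?SP = "setparts (a*s) s a"
  have fin: "finite ?SP" by (rule finite_setparts)
  show "\<forall>\<delta>\<in>?SP. \<forall>g\<in>Cgrp p (a*s). \<forall>v\<in>(Kdelta p a s \<delta> :: (nat set set \<Rightarrow> 'f) set).
        act_vec p a s g v \<in> Kdelta p a s \<delta>"
  proof (intro ballI)
    fix \<delta> g and v :: "nat set set \<Rightarrow> 'f"
    assume d: "\<delta> \<in> ?SP" and g: "g \<in> Cgrp p (a*s)" and v: "v \<in> Kdelta p a s \<delta>"
    obtain c where gc: "g = Fm p c" using Cgrp_Fm[OF p g] by blast
    show "act_vec p a s g v \<in> Kdelta p a s \<delta>"
      unfolding Kdelta_def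
    proof (intro CollectI allI impI)
      fix \<omega>' assume ne: "act_vec p a s g v \<omega>' \<noteq> 0"
      have "\<exists>\<omega>. \<omega> \<in> fixparts p a s \<and> act_part g \<omega> = \<omega>' \<and> v \<omega> \<noteq> 0"
      proof (rule ccontr)
        assume "\<nexists>\<omega>. \<omega> \<in> fixparts p a s \<and> act_part g \<omega> = \<omega>' \<and> v \<omega> \<noteq> 0"
        hence "act_vec p a s g v \<omega>' = 0" unfolding act_vec_def by (intro sum.neutral) blast
        thus False using ne by simp
      qed
      then obtain \<omega> where om: "\<omega> \<in> fixparts p a s" "act_part g \<omega> = \<omega>'" "v \<omega> \<noteq> 0" by blast
      have "has_type p a s \<delta> \<omega>" using v om(3) by (simp add: Kdelta_def)
      hence "has_type p a s \<delta> \<omega>'" using C_type[OF p] om(2) gc by blast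
      moreover have "\<omega>' \<in> fixparts p a s" using C_fix[OF p om(1)] om(2) gc by blast
      ultimately show "\<omega>' \<in> fixparts p a s \<and> has_type p a s \<delta> \<omega>'" by blast
    qed
  qed
  show "\<forall>v\<in>(Hbr p a s :: (nat set set \<Rightarrow> 'f) set). \<exists>u. (\<forall>\<delta>\<in>?SP. u \<delta> \<in> Kdelta p a s \<delta>)
           \<and> v = (\<lambda>\<omega>. \<Sum>\<delta>\<in>?SP. u \<delta> \<omega>)"
  proof
    fix v :: "nat set set \<Rightarrow> 'f" assume v: "v \<in> Hbr p a s"
    define u where "u \<delta> \<omega> = (if has_type p a s \<delta> \<omega> then v \<omega> else 0)" for \<delta> \<omega>
    have "\<forall>\<delta>\<in>?SP. u \<delta> \<in> Kdelta p a s \<delta>"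
    proof (intro ballI)
      fix \<delta>
      show "u \<delta> \<in> Kdelta p a s \<delta>" unfolding Kdelta_def
      proof (intro CollectI allI impI)
        fix \<omega> assume "u \<delta> \<omega> \<noteq> 0"
        hence "has_type p a s \<delta> \<omega>" "v \<omega> \<noteq> 0" by (auto simp: u_def split: if_splits)
        moreover have "v \<omega> \<noteq> 0 \<Longrightarrow> \<omega> \<in> fixparts p a s" using v unfolding Hbr_def by blast
        ultimately show "\<omega> \<in> fixparts p a s \<and> has_type p a s \<delta> \<omega>" by blast
      qed
    qed
    moreover have "v = (\<lambda>\<omega>. \<Sum>\<delta>\<in>?SP. u \<delta> \<omega>)"
    proof
      fix \<omega>
      show "v \<omega> = (\<Sum>\<delta>\<in>?SP. u \<delta> \<omega>)"
      proof (cases "v \<omega> = 0")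
        case True
        have "(\<Sum>\<delta>\<in>?SP. u \<delta> \<omega>) = 0" by (rule sum.neutral) (simp add: u_def True)
        thus ?thesis using True by simp
      next
        case False
        hence w: "\<omega> \<in> fixparts p a s" using v by (simp add: Hbr_def)
        obtain \<delta>0 where d0: "\<delta>0 \<in> ?SP" "has_type p a s \<delta>0 \<omega>"
          using type_exists[OF pr assms(4) w] by blast
        have "(\<Sum>\<delta>\<in>?SP. u \<delta> \<omega>) = (\<Sum>\<delta>\<in>?SP. if \<delta> = \<delta>0 then v \<omega> else 0)"
        proof (rule sum.cong[OF refl])
          fix \<delta> assume d: "\<delta> \<in> ?SP"
          show "u \<delta> \<omega> = (if \<delta> = \<delta>0 then v \<omega> else 0)"
          proof (cases "has_type p a s \<delta> \<omega>")
            case True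
            hence "\<delta> = \<delta>0" by (rule type_same[OF p w d _ d0(1) d0(2)])
            thus ?thesis using True by (simp add: u_def)
          next
            case False
            hence "\<delta> \<noteq> \<delta>0" using d0(2) by blast
            thus ?thesis using False by (simp add: u_def)
          qed
        qed
        also have "\<dots> = v \<omega>" using fin d0(1) by simp
        finally show ?thesis by simp
      qed
    qed
    ultimately show "\<exists>u. (\<forall>\<delta>\<in>?SP. u \<delta> \<in> Kdelta p a s \<delta>) \<and> v = (\<lambda>\<omega>. \<Sum>\<delta>\<in>?SP. u \<delta> \<omega>)"
      by blast
  qed
  show "\<forall>u :: nat set set \<Rightarrow> nat set set \<Rightarrow> 'f. (\<forall>\<delta>\<in>?SP. u \<delta> \<in> Kdelta p a s \<delta>)
           \<and> (\<forall>\<omega>. (\<Sum>\<delta>\<in>?SP. u \<delta> \<omega>) = 0) \<longrightarrow> (\<forall>\<delta>\<in>?SP. \<forall>\<omega>. u \<delta> \<omega> = 0)"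
  proof (intro allI impI ballI)
    fix u :: "nat set set \<Rightarrow> nat set set \<Rightarrow> 'f" and \<delta>0 \<omega>
    assume H: "(\<forall>\<delta>\<in>?SP. u \<delta> \<in> Kdelta p a s \<delta>) \<and> (\<forall>\<omega>. (\<Sum>\<delta>\<in>?SP. u \<delta> \<omega>) = 0)"
      and d0: "\<delta>0 \<in> ?SP"
    show "u \<delta>0 \<omega> = 0"
    proof (rule ccontr)
      assume ne: "u \<delta>0 \<omega> \<noteq> 0"
      have K: "\<omega> \<in> fixparts p a s \<and> has_type p a s \<delta> \<omega>" if "\<delta> \<in> ?SP" "u \<delta> \<omega> \<noteq> 0" for \<delta>
      proof -
        have "u \<delta> \<in> Kdelta p a s \<delta>" using H that(1) by blast
        thus ?thesis using that(2) unfolding Kdelta_def by blast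
      qed
      have w: "\<omega> \<in> fixparts p a s" and t0: "has_type p a s \<delta>0 \<omega>" using K[OF d0 ne] by auto
      have "(\<Sum>\<delta>\<in>?SP. u \<delta> \<omega>) = (\<Sum>\<delta>\<in>?SP. if \<delta> = \<delta>0 then u \<delta>0 \<omega> else 0)"
      proof (rule sum.cong[OF refl])
        fix \<delta> assume d: "\<delta> \<in> ?SP"
        show "u \<delta> \<omega> = (if \<delta> = \<delta>0 then u \<delta>0 \<omega> else 0)"
        proof (cases "u \<delta> \<omega> = 0")
          case True
          hence "\<delta> \<noteq> \<delta>0" using ne by blast
          thus ?thesis using True by simp
        next
          case False
          hence "has_type p a s \<delta> \<omega>" using K[OF d] by blast
          hence "\<delta> = \<delta>0" using type_same[OF p w d _ d0 t0] by blast
          thus ?thesis by simp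
        qed
      qed
      also have "\<dots> = u \<delta>0 \<omega>" using fin d0 by simp
      finally have "(\<Sum>\<delta>\<in>?SP. u \<delta> \<omega>) = u \<delta>0 \<omega>" .
      moreover have "(\<Sum>\<delta>\<in>?SP. u \<delta> \<omega>) = 0" using H by blast
      ultimately show False using ne by simp
    qed
  qed
qed

end
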